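(* Let $(M, d)$ be a complete pointed metric space. Then the set $\check{M} := \{\check{x} : x \in M\}$ is a closed subset of the dual Banach space $(M^e)^*$, where $\check{x}(f)=f(x)$ for $f\in M^e$.
   Context: A pointed metric space is a metric space with a distinguished point $0$. $M^e$ denotes the normed space $E_c(M,\mathbb{R})$ of all continuous functions $f:M\to\mathbb{R}$ for which there is $k>0$ with $|f(x)|\le k\,d(x,0)$ for all $x\in M$, with norm $\|f\|_e=\sup_{x\in M,x\ne0}|f(x)|/d(x,0)$; $(M^e)^*$ is its dual with the operator norm. *)

theory Defs
  imports "HOL-Analysis.Analysis"
begin

definition Me :: "'a::metric_space \<Rightarrow> ('a \<Rightarrow> real) set" where
  "Me z = {f. continuous_on UNIV f \<and> (\<exists>k>0. \<forall>x. \<bar>f x\<bar> \<le> k * dist x z)}"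

definition norm_e :: "'a::metric_space \<Rightarrow> ('a \<Rightarrow> real) \<Rightarrow> real" where
  "norm_e z f = (SUP x\<in>{x. x \<noteq> z}. \<bar>f x\<bar> / dist x z)"

text \<open>Elements of the dual (M^e)^*: bounded linear functionals on M^e
  (represented as functions on all real-valued maps; only values on Me matter).\<close>
definition in_dual :: "'a::metric_space \<Rightarrow> (('a \<Rightarrow> real) \<Rightarrow> real) \<Rightarrow> bool" where
  "in_dual z \<phi> \<longleftrightarrow>
     (\<forall>f\<in>Me z. \<forall>g\<in>Me z. \<forall>a b::real. \<phi> (\<lambda>x. a * f x + b * g x) = a * \<phi> f + b * \<phi> g) \<and>
     (\<exists>C. \<forall>f\<in>Me z. \<bar>\<phi> f\<bar> \<le> C * norm_e z f)"

definition dual_norm :: "'a::metric_space \<Rightarrow> (('a \<Rightarrow> real) \<Rightarrow> real) \<Rightarrow> real" where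
  "dual_norm z \<phi> = (SUP f\<in>{f\<in>Me z. norm_e z f \<le> 1}. \<bar>\<phi> f\<bar>)"

definition evalf :: "'a \<Rightarrow> ('a \<Rightarrow> real) \<Rightarrow> real" where
  "evalf x = (\<lambda>f. f x)"

end

theory Submission
  imports Defs
begin

lemma Me_zero: "f \<in> Me z \<Longrightarrow> f z = 0"
proof -
  assume "f \<in> Me z"
  then obtain k where "\<forall>x. \<bar>f x\<bar> \<le> k * dist x z" unfolding Me_def by auto
  hence "\<bar>f z\<bar> \<le> k * dist z z" by blast
  thus "f z = 0" by simp
qed

lemma Me_bdd: "f \<in> Me z \<Longrightarrow> bdd_above ((\<lambda>x. \<bar>f x\<bar> / dist x z) ` {x. x \<noteq> z})"
proof -
  assume "f \<in> Me z"
  then obtain k where k: "k > 0" "\<forall>x. \<bar>f x\<bar> \<le> k * dist x z" unfolding Me_def by auto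
  have "\<bar>f x\<bar> / dist x z \<le> k" if "x \<noteq> z" for x
    using k that by (simp add: divide_le_eq)
  thus ?thesis by (auto intro!: bdd_aboveI2)
qed

lemma Me_le: assumes "f \<in> Me z" shows "\<bar>f x\<bar> \<le> norm_e z f * dist x z"
proof (cases "x = z")
  case True thus ?thesis using Me_zero[OF assms] by simp
next
  case False
  have "\<bar>f x\<bar> / dist x z \<le> norm_e z f"
    unfolding norm_e_def using False by (intro cSUP_upper Me_bdd assms) auto
  thus ?thesis using False by (simp add: divide_le_eq)
qed

lemma norm_e_nonneg: assumes "f \<in> Me z" "w \<noteq> z" shows "0 \<le> norm_e z f"
proof -
  have "\<bar>f w\<bar> / dist w z \<le> norm_e z f"
    unfolding norm_e_def using assms by (intro cSUP_upper Me_bdd) auto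
  moreover have "0 \<le> \<bar>f w\<bar> / dist w z" by simp
  ultimately show ?thesis by linarith
qed

lemma key:
  assumes "in_dual z \<phi>" "w \<noteq> z" "f \<in> Me z" "norm_e z f \<le> 1"
  shows "\<bar>\<phi> f - f x\<bar> \<le> dual_norm z (\<lambda>f. \<phi> f - evalf x f)"
proof -
  obtain C where C: "\<forall>f\<in>Me z. \<bar>\<phi> f\<bar> \<le> C * norm_e z f" using assms(1) unfolding in_dual_def by auto
  have "\<bar>\<phi> g - g x\<bar> \<le> \<bar>C\<bar> + dist x z" if g: "g \<in> Me z" "norm_e z g \<le> 1" for g
  proof -
    have n0: "0 \<le> norm_e z g" using norm_e_nonneg[OF g(1) assms(2)] .
    have "\<bar>\<phi> g\<bar> \<le> C * norm_e z g" using C g by auto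
    also have "\<dots> \<le> \<bar>C\<bar> * norm_e z g" using n0 by (simp add: mult_right_mono)
    also have "\<dots> \<le> \<bar>C\<bar>" using g(2) n0 by (simp add: mult_left_le)
    finally have 1: "\<bar>\<phi> g\<bar> \<le> \<bar>C\<bar>" .
    have "\<bar>g x\<bar> \<le> norm_e z g * dist x z" using Me_le[OF g(1)] .
    also have "\<dots> \<le> dist x z" using g(2) n0 by (simp add: mult_left_le_one_le)
    finally show ?thesis using 1 by linarith
  qed
  hence "bdd_above ((\<lambda>f. \<bar>\<phi> f - evalf x f\<bar>) ` {f\<in>Me z. norm_e z f \<le> 1})"
    by (auto simp: evalf_def intro!: bdd_aboveI2)
  hence "\<bar>\<phi> f - evalf x f\<bar> \<le> dual_norm z (\<lambda>f. \<phi> f - evalf x f)"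
    unfolding dual_norm_def using assms by (intro cSUP_upper) auto
  thus ?thesis by (simp add: evalf_def)
qed

lemma dist_fun_Me: "(\<lambda>t. dist t y - dist z y) \<in> Me z"
proof -
  have "\<bar>dist t y - dist z y\<bar> \<le> 1 * dist t z" for t
    by (smt (verit) dist_commute dist_triangle)
  thus ?thesis unfolding Me_def by (auto intro!: continuous_intros exI[of _ 1])
qed

lemma dist_fun_norm: assumes "w \<noteq> z" shows "norm_e z (\<lambda>t. dist t y - dist z y) \<le> 1"
proof -
  have "\<bar>dist t y - dist z y\<bar> / dist t z \<le> 1" if "t \<noteq> z" for t
    using that by (simp add: divide_le_eq) (smt (verit) dist_commute dist_triangle)
  thus ?thesis unfolding norm_e_def using assms by (intro cSUP_least) auto
qed

theorem mainTheorem12: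
  fixes z :: "'a::complete_space"
  assumes "in_dual z \<phi>"
    and "\<forall>e>0. \<exists>x. dual_norm z (\<lambda>f. \<phi> f - evalf x f) < e"
  shows "\<exists>x. \<forall>f\<in>Me z. \<phi> f = evalf x f"
proof (cases "\<exists>w. w \<noteq> z")
  case False
  hence all: "\<And>t. t = z" by auto
  have lin: "\<forall>f\<in>Me z. \<forall>g\<in>Me z. \<forall>a b::real. \<phi> (\<lambda>x. a * f x + b * g x) = a * \<phi> f + b * \<phi> g"
    using assms(1) unfolding in_dual_def by auto
  have "\<phi> f = evalf z f" if f: "f \<in> Me z" for f
  proof -
    have f0: "f = (\<lambda>x. 0 * f x + 0 * f x)" proof (rule ext)
      fix t show "f t = 0 * f t + 0 * f t" using Me_zero[OF f] all[of t] by simp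
    qed
    have "\<phi> (\<lambda>x. 0 * f x + 0 * f x) = 0 * \<phi> f + 0 * \<phi> f" using lin f by blast
    hence "\<phi> (\<lambda>x. 0 * f x + 0 * f x) = 0" by simp
    thus ?thesis using f0 Me_zero[OF f] by (simp add: evalf_def)
  qed
  thus ?thesis by blast
next
  case True
  then obtain w where w: "w \<noteq> z" by auto
  have lin: "\<forall>f\<in>Me z. \<forall>g\<in>Me z. \<forall>a b::real. \<phi> (\<lambda>x. a * f x + b * g x) = a * \<phi> f + b * \<phi> g"
    using assms(1) unfolding in_dual_def by auto
  have "\<forall>n. \<exists>x. dual_norm z (\<lambda>f. \<phi> f - evalf x f) < 1 / (real n + 1)"
    using assms(2) by auto
  then obtain xs where xs: "\<And>n. dual_norm z (\<lambda>f. \<phi> f - evalf (xs n) f) < 1 / (real n + 1)"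
    by metis
  have bnd: "\<bar>\<phi> f - f (xs n)\<bar> \<le> 1 / (real n + 1)" if "f \<in> Me z" "norm_e z f \<le> 1" for f n
    using key[OF assms(1) w that, of "xs n"] xs[of n] by linarith
  have dxs: "dist (xs n) (xs m) \<le> 1 / (real n + 1) + 1 / (real m + 1)" for n m
  proof -
    let ?f = "\<lambda>t. dist t (xs m) - dist z (xs m)"
    have A: "\<bar>\<phi> ?f - ?f (xs n)\<bar> \<le> 1 / (real n + 1)"
      using bnd[OF dist_fun_Me dist_fun_norm[OF w], of "xs m" n] .
    have B: "\<bar>\<phi> ?f - ?f (xs m)\<bar> \<le> 1 / (real m + 1)"
      using bnd[OF dist_fun_Me dist_fun_norm[OF w], of "xs m" m] .
    show ?thesis using A B by (simp add: abs_le_iff)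
  qed
  have "Cauchy xs"
  proof (rule metric_CauchyI)
    fix e :: real assume e: "e > 0"
    obtain N :: nat where N: "2 / e < real N" using reals_Archimedean2 by blast
    have "dist (xs m) (xs n) < e" if "m \<ge> N" "n \<ge> N" for m n
    proof -
      have "1 / (real m + 1) \<le> 1 / (real N + 1)" "1 / (real n + 1) \<le> 1 / (real N + 1)"
        using that by (auto intro!: divide_left_mono)
      moreover have "2 < e * (real N + 1)" using N e by (simp add: divide_less_eq algebra_simps)
      hence "2 / (real N + 1) < e" by (simp add: divide_less_eq mult.commute)
      ultimately show ?thesis using dxs[of m n] by simp
    qed
    thus "\<exists>M. \<forall>m\<ge>M. \<forall>n\<ge>M. dist (xs m) (xs n) < e" by blast
  qed
  then obtain x where x: "xs \<longlonglongrightarrow> x" using Cauchy_convergent_iff convergent_def by blast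
  have "\<phi> f = evalf x f" if f: "f \<in> Me z" for f
  proof -
    define c where "c = 1 / (norm_e z f + 1)"
    have n0: "0 \<le> norm_e z f" using norm_e_nonneg[OF f w] .
    have c0: "c > 0" using n0 by (simp add: c_def)
    define g where "g = (\<lambda>x. c * f x + 0 * f x)"
    have gc: "g = (\<lambda>x. c * f x)" by (simp add: g_def)
    have "\<phi> g = c * \<phi> f + 0 * \<phi> f" using lin f unfolding g_def by blast
    hence phig: "\<phi> g = c * \<phi> f" by simp
    have gMe: "g \<in> Me z"
    proof -
      obtain k where k: "k > 0" "\<forall>x. \<bar>f x\<bar> \<le> k * dist x z" using f unfolding Me_def by auto
      have "\<bar>c * f t\<bar> \<le> (c * k) * dist t z" for t
        using k c0 by (simp add: abs_mult mult.assoc mult_left_mono)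
      moreover have "continuous_on UNIV (\<lambda>t. c * f t)" using f unfolding Me_def
        by (auto intro!: continuous_intros)
      ultimately show ?thesis unfolding gc Me_def using c0 k by (auto intro!: exI[of _ "c*k"])
    qed
    have gn: "norm_e z g \<le> 1"
    proof -
      have "\<bar>g t\<bar> / dist t z \<le> 1" if "t \<noteq> z" for t
      proof -
        have "\<bar>f t\<bar> \<le> norm_e z f * dist t z" using Me_le[OF f] .
        hence "\<bar>g t\<bar> \<le> c * norm_e z f * dist t z" using c0 unfolding gc
          by (simp add: abs_mult mult.assoc mult_left_mono)
        also have "c * norm_e z f \<le> 1" using n0 by (simp add: c_def)
        hence "c * norm_e z f * dist t z \<le> dist t z" using mult_right_mono[of "c * norm_e z f" 1 "dist t z"] by simp
        finally show ?thesis using that by (simp add: divide_le_eq)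
      qed
      thus ?thesis unfolding norm_e_def using w by (intro cSUP_least) auto
    qed
    have b: "\<bar>\<phi> f - f (xs n)\<bar> \<le> (norm_e z f + 1) * (1 / (real n + 1))" for n
    proof -
      have "\<bar>c * (\<phi> f - f (xs n))\<bar> \<le> 1 / (real n + 1)"
        using bnd[OF gMe gn, of n] phig unfolding gc by (simp add: algebra_simps)
      hence "c * \<bar>\<phi> f - f (xs n)\<bar> \<le> 1 / (real n + 1)" using c0 by (simp add: abs_mult)
      thus ?thesis using n0 unfolding c_def by (simp add: field_simps)
    qed
    have l0: "(\<lambda>n. (norm_e z f + 1) * (1 / (real n + 1))) \<longlonglongrightarrow> 0"
      using tendsto_mult_right_zero[OF LIMSEQ_inverse_real_of_nat] by (simp add: inverse_eq_divide add.commute)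
    have L1: "(\<lambda>n. \<phi> f - f (xs n)) \<longlonglongrightarrow> 0"
      by (rule Lim_null_comparison[OF _ l0]) (use b in auto)
    have cont: "continuous_on UNIV f" using f unfolding Me_def by auto
    have "(\<lambda>n. f (xs n)) \<longlonglongrightarrow> f x"
      using continuous_on_tendsto_compose[OF cont x] by auto
    hence L2: "(\<lambda>n. \<phi> f - f (xs n)) \<longlonglongrightarrow> \<phi> f - f x" by (intro tendsto_intros)
    have "\<phi> f - f x = 0" using LIMSEQ_unique[OF L2 L1] .
    thus ?thesis by (simp add: evalf_def)
  qed
  thus ?thesis by blast
qed

end
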